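(* Let $\mathcal C\subseteq(S^2)^n$ be a vector trifferent code with $|\mathcal C|\ge2$. Then \[ \binom{|\mathcal C|}{2}\cdot \mathbb E_{\{x,y\}}\bigl[2^{A(x,y)}\bigr]\le 3^n, \] where the expectation is over a uniformly random $2$-element subset $\{x,y\}$ of $\mathcal C$ and $A(x,y)=|\{i\in[n]:\langle x_i,y_i\rangle\neq0\}|$. Equivalently $\sum_{\{x,y\}\subseteq\mathcal C,\,x\ne y}2^{A(x,y)}\le 3^n$.
   Context: $S^2$ is the unit sphere in $\mathbb R^3$. A vector trifferent code of block length $n$ is a subset $\mathcal C\subseteq(S^2)^n$ such that for any three distinct $x,y,z\in\mathcal C$ there is $i\in[n]$ with $x_i,y_i,z_i$ mutually orthogonal. *)

theory Defs
  imports "HOL-Analysis.Analysis"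
begin

definition sphere_words :: "nat \<Rightarrow> (nat \<Rightarrow> real^3) set" where
  "sphere_words n = PiE {..<n} (\<lambda>_. sphere (0::real^3) 1)"

definition vector_trifferent :: "nat \<Rightarrow> (nat \<Rightarrow> real^3) set \<Rightarrow> bool" where
  "vector_trifferent n C \<longleftrightarrow> C \<subseteq> sphere_words n \<and>
     (\<forall>x\<in>C. \<forall>y\<in>C. \<forall>z\<in>C. x \<noteq> y \<and> y \<noteq> z \<and> x \<noteq> z \<longrightarrow>
        (\<exists>i<n. x i \<bullet> y i = 0 \<and> y i \<bullet> z i = 0 \<and> x i \<bullet> z i = 0))"

definition agree_count :: "nat \<Rightarrow> (nat \<Rightarrow> real^3) \<Rightarrow> (nat \<Rightarrow> real^3) \<Rightarrow> nat" where
  "agree_count n x y = card {i \<in> {..<n}. x i \<bullet> y i \<noteq> 0}"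

end

theory Submission
  imports Defs
begin

lemma expand3:
  fixes x y z v :: "real^3"
  assumes "norm x = 1" "norm y = 1" "norm z = 1" "x \<bullet> y = 0" "y \<bullet> z = 0" "x \<bullet> z = 0"
  shows "v = (v \<bullet> x) *\<^sub>R x + (v \<bullet> y) *\<^sub>R y + (v \<bullet> z) *\<^sub>R z"
proof (rule ccontr)
  define r where "r = v - ((v \<bullet> x) *\<^sub>R x + (v \<bullet> y) *\<^sub>R y + (v \<bullet> z) *\<^sub>R z)"
  have xx: "x \<bullet> x = 1" "y \<bullet> y = 1" "z \<bullet> z = 1" using assms by (simp_all add: dot_square_norm)
  have rx: "r \<bullet> x = 0" "r \<bullet> y = 0" "r \<bullet> z = 0"
  proof -
    have s: "y \<bullet> x = 0" "z \<bullet> y = 0" "z \<bullet> x = 0" using assms by (simp_all add: inner_commute)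
    show "r \<bullet> x = 0" "r \<bullet> y = 0" "r \<bullet> z = 0"
      unfolding r_def using assms xx s by (simp_all add: inner_diff_left inner_add_left)
  qed
  assume "\<not> ?thesis"
  hence r0: "r \<noteq> 0" unfolding r_def by simp
  have d: "x \<noteq> y" "y \<noteq> z" "x \<noteq> z" "x \<noteq> r" "y \<noteq> r" "z \<noteq> r" using assms xx rx r0
    by (metis inner_eq_zero_iff zero_neq_one)+
  let ?S = "{x, y, z, r}"
  have "pairwise orthogonal ?S" using assms rx
    by (auto simp: pairwise_def orthogonal_def inner_commute)
  moreover have "0 \<notin> ?S" using assms r0 by auto
  ultimately have "independent ?S" by (rule pairwise_orthogonal_independent)
  hence "card ?S \<le> DIM(real^3)" using independent_bound by blast
  moreover have "card ?S = 4" using d by auto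
  ultimately show False by simp
qed

lemma key3:
  fixes x y z b c :: "real^3"
  assumes "norm x = 1" "norm y = 1" "norm z = 1" "x \<bullet> y = 0" "y \<bullet> z = 0" "x \<bullet> z = 0"
    and "b \<bullet> x = 0" "b \<bullet> y = 0" "c \<bullet> z = 0"
  shows "b \<bullet> c = 0"
proof -
  have "b = (b \<bullet> z) *\<^sub>R z" using expand3[OF assms(1-6), of b] assms by simp
  hence "b \<bullet> c = (b \<bullet> z) * (z \<bullet> c)" by (metis inner_scaleR_left)
  thus ?thesis using assms by (simp add: inner_commute)
qed

lemma ob_exists:
  fixes u :: "real^3"
  assumes "u \<noteq> 0"
  shows "\<exists>B. B \<subseteq> {v. u \<bullet> v = 0} \<and> finite B \<and> card B = 2 \<and> (\<forall>b\<in>B. norm b = 1) \<and>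
     (\<forall>b\<in>B. \<forall>c\<in>B. b \<noteq> c \<longrightarrow> b \<bullet> c = 0)"
proof -
  have sub: "subspace {v. u \<bullet> v = 0}" by (rule subspace_hyperplane)
  obtain B where B: "B \<subseteq> {v. u \<bullet> v = 0}" "pairwise orthogonal B" "\<And>x. x \<in> B \<Longrightarrow> norm x = 1"
    "independent B" "card B = dim {v. u \<bullet> v = 0}"
    using orthonormal_basis_subspace[OF sub] by metis
  have "dim {v. u \<bullet> v = 0} = 2" using dim_hyperplane[OF assms] by simp
  moreover have "finite B" using B(4) independent_bound by blast
  ultimately show ?thesis using B by (auto simp: pairwise_def orthogonal_def)
qed

lemma cross_unit:
  fixes x y :: "real^3"
  assumes "norm x = 1" "norm y = 1" "x \<bullet> y = 0"
  shows "norm (cross3 x y) = 1" "x \<bullet> cross3 x y = 0" "y \<bullet> cross3 x y = 0"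
proof -
  have "(norm (cross3 x y))\<^sup>2 = 1" using norm_cross_dot[of x y] assms by simp
  thus "norm (cross3 x y) = 1" using norm_ge_zero by (smt (verit) power2_eq_1_iff)
  show "x \<bullet> cross3 x y = 0" "y \<bullet> cross3 x y = 0" using dot_cross_self by (auto simp: inner_commute)
qed


lemma bessel_card:
  fixes e :: "'j \<Rightarrow> 'w \<Rightarrow> real"
  assumes fJ: "finite J" and fW: "finite W"
    and orth: "\<And>j k. j \<in> J \<Longrightarrow> k \<in> J \<Longrightarrow> (\<Sum>w\<in>W. e j w * e k w) = (if j = k then 1 else 0)"
  shows "card J \<le> card W"
proof -
  have pt: "(\<Sum>j\<in>J. (e j w)\<^sup>2) \<le> 1" if w: "w \<in> W" for w
  proof -
    define c where "c j = e j w" for j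
    define S where "S = (\<Sum>j\<in>J. (c j)\<^sup>2)"
    define h where "h v = (\<Sum>j\<in>J. c j * e j v)" for v
    have "(\<Sum>v\<in>W. h v * h v) = (\<Sum>v\<in>W. \<Sum>j\<in>J. \<Sum>k\<in>J. c j * c k * (e j v * e k v))"
      unfolding h_def by (simp add: sum_product algebra_simps)
    also have "\<dots> = (\<Sum>j\<in>J. \<Sum>k\<in>J. c j * c k * (\<Sum>v\<in>W. e j v * e k v))"
      by (simp add: sum.swap[of _ W] sum_distrib_left)
    also have "\<dots> = (\<Sum>j\<in>J. \<Sum>k\<in>J. c j * c k * (if j = k then 1 else 0))"
      using orth by (intro sum.cong refl) auto
    also have "\<dots> = S" unfolding S_def using fJ by (simp add: power2_eq_square if_distrib sum.delta cong: if_cong)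
    finally have hh: "(\<Sum>v\<in>W. h v * h v) = S" .
    have hw: "h w = S" unfolding h_def S_def c_def by (simp add: power2_eq_square)
    have "h w * h w \<le> (\<Sum>v\<in>W. h v * h v)"
      using member_le_sum[of w W "\<lambda>v. h v * h v"] w fW by simp
    hence "S * S \<le> S" using hh hw by simp
    moreover have "S \<ge> 0" unfolding S_def by (simp add: sum_nonneg)
    ultimately have "S \<le> 1"
      by (smt (verit) mult_le_cancel_left2)
    thus ?thesis unfolding S_def c_def .
  qed
  have "real (card J) = (\<Sum>j\<in>J. \<Sum>w\<in>W. (e j w)\<^sup>2)"
    using orth by (simp add: power2_eq_square)
  also have "\<dots> = (\<Sum>w\<in>W. \<Sum>j\<in>J. (e j w)\<^sup>2)" by (rule sum.swap)
  also have "\<dots> \<le> (\<Sum>w\<in>W. 1)" using pt by (intro sum_mono) auto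
  also have "\<dots> = real (card W)" by simp
  finally show ?thesis by simp
qed


definition ob :: "real^3 \<Rightarrow> (real^3) set" where
  "ob u = (SOME B. B \<subseteq> {v. u \<bullet> v = 0} \<and> finite B \<and> card B = 2 \<and> (\<forall>b\<in>B. norm b = 1) \<and>
     (\<forall>b\<in>B. \<forall>c\<in>B. b \<noteq> c \<longrightarrow> b \<bullet> c = 0))"

lemma ob_props:
  assumes "u \<noteq> 0"
  shows "ob u \<subseteq> {v. u \<bullet> v = 0} \<and> finite (ob u) \<and> card (ob u) = 2 \<and> (\<forall>b\<in>ob u. norm b = 1) \<and>
     (\<forall>b\<in>ob u. \<forall>c\<in>ob u. b \<noteq> c \<longrightarrow> b \<bullet> c = 0)"
  unfolding ob_def using someI_ex[OF ob_exists[OF assms]] .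

definition Bs :: "real^3 \<Rightarrow> real^3 \<Rightarrow> (real^3) set" where
  "Bs a b = (if a \<bullet> b = 0 then {cross3 a b} else ob a)"

lemma Bs_props:
  fixes a b :: "real^3"
  assumes "norm a = 1" "norm b = 1"
  shows "finite (Bs a b)" "card (Bs a b) = (if a \<bullet> b = 0 then 1 else 2)"
    "\<And>v. v \<in> Bs a b \<Longrightarrow> norm v = 1"
    "\<And>v w. v \<in> Bs a b \<Longrightarrow> w \<in> Bs a b \<Longrightarrow> v \<noteq> w \<Longrightarrow> v \<bullet> w = 0"
    "\<And>v. v \<in> Bs a b \<Longrightarrow> v \<bullet> a = 0"
    "\<And>v. v \<in> Bs a b \<Longrightarrow> a \<bullet> b = 0 \<Longrightarrow> v \<bullet> b = 0"
proof -
  have a0: "a \<noteq> 0" using assms by auto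
  note O = ob_props[OF a0]
  note X = cross_unit[OF assms]
  show "finite (Bs a b)" "card (Bs a b) = (if a \<bullet> b = 0 then 1 else 2)"
    using O by (auto simp: Bs_def)
  show "\<And>v. v \<in> Bs a b \<Longrightarrow> norm v = 1"
    using O X by (auto simp: Bs_def split: if_splits)
  show "\<And>v w. v \<in> Bs a b \<Longrightarrow> w \<in> Bs a b \<Longrightarrow> v \<noteq> w \<Longrightarrow> v \<bullet> w = 0"
    using O by (auto simp: Bs_def split: if_splits)
  show "\<And>v. v \<in> Bs a b \<Longrightarrow> v \<bullet> a = 0"
    using O X dot_cross_self by (auto simp: Bs_def inner_commute split: if_splits)
  show "\<And>v. v \<in> Bs a b \<Longrightarrow> a \<bullet> b = 0 \<Longrightarrow> v \<bullet> b = 0"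
    using dot_cross_self by (auto simp: Bs_def)
qed

lemma inner_prod_sum:
  fixes s t :: "nat \<Rightarrow> real^3"
  shows "(\<Sum>w\<in>PiE {..<n} (\<lambda>_. UNIV :: 3 set). (\<Prod>i<n. s i $ w i) * (\<Prod>i<n. t i $ w i))
         = (\<Prod>i<n. s i \<bullet> t i)"
proof -
  have "(\<Sum>w\<in>PiE {..<n} (\<lambda>_. UNIV :: 3 set). (\<Prod>i<n. s i $ w i) * (\<Prod>i<n. t i $ w i))
      = (\<Sum>w\<in>PiE {..<n} (\<lambda>_. UNIV :: 3 set). (\<Prod>i<n. s i $ w i * t i $ w i))"
    by (simp add: prod.distrib)
  also have "\<dots> = (\<Prod>i<n. \<Sum>k\<in>(UNIV::3 set). s i $ k * t i $ k)"
    by (rule prod_sum_PiE[symmetric]) auto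
  also have "\<dots> = (\<Prod>i<n. s i \<bullet> t i)" by (simp add: inner_vec_def)
  finally show ?thesis .
qed


theorem mainTheorem7:
  fixes n :: nat and C :: "(nat \<Rightarrow> real^3) set"
  assumes "vector_trifferent n C" and "finite C" and "card C \<ge> 2"
  shows "(\<Sum>(x, y)\<in>{(x, y). x \<in> C \<and> y \<in> C \<and> x \<noteq> y}. (2::real) ^ agree_count n x y) / 2
         \<le> 3 ^ n"
proof -
  have sub: "C \<subseteq> sphere_words n" and tri: "\<And>x y z. x\<in>C \<Longrightarrow> y\<in>C \<Longrightarrow> z\<in>C \<Longrightarrow> x \<noteq> y \<Longrightarrow> y \<noteq> z \<Longrightarrow> x \<noteq> z \<Longrightarrow>
        (\<exists>i<n. x i \<bullet> y i = 0 \<and> y i \<bullet> z i = 0 \<and> x i \<bullet> z i = 0)"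
    using assms(1) unfolding vector_trifferent_def by blast+
  have nrm: "norm (x i) = 1" if "x \<in> C" "i < n" for x i
    using sub that unfolding sphere_words_def by (auto simp: PiE_iff)
  obtain g where g: "bij_betw g C {0..<card C}" using ex_bij_betw_finite_nat[OF assms(2)] by blast
  have ginj: "\<And>x y. x \<in> C \<Longrightarrow> y \<in> C \<Longrightarrow> g x = g y \<Longrightarrow> x = y"
    using g by (meson bij_betw_imp_inj_on inj_onD)
  define P where "P = {(x, y). x \<in> C \<and> y \<in> C \<and> x \<noteq> y}"
  define Q where "Q = {(x, y). x \<in> C \<and> y \<in> C \<and> g x < g y}"
  define h where "h x y = (2::real) ^ agree_count n x y" for x y
  have hsym: "h x y = h y x" for x y
    unfolding h_def agree_count_def by (simp add: inner_commute)
  have fP: "finite P" unfolding P_def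
    by (rule finite_subset[of _ "C \<times> C"]) (use assms(2) in auto)
  have PQ: "P = Q \<union> prod.swap ` Q"
    unfolding P_def Q_def using ginj by (auto simp: image_iff) (metis linorder_neqE_nat)
  have disj: "Q \<inter> prod.swap ` Q = {}" unfolding Q_def by auto
  have fQ: "finite Q" using fP PQ by auto
  have "(\<Sum>(x, y)\<in>P. h x y) = (\<Sum>(x, y)\<in>Q. h x y) + (\<Sum>(x, y)\<in>prod.swap ` Q. h x y)"
    unfolding PQ using fQ disj by (simp add: sum.union_disjoint)
  also have "(\<Sum>(x, y)\<in>prod.swap ` Q. h x y) = (\<Sum>(x, y)\<in>Q. h x y)"
    by (subst sum.reindex) (auto simp: hsym case_prod_beta)
  finally have PQsum: "(\<Sum>(x, y)\<in>P. h x y) = 2 * (\<Sum>(x, y)\<in>Q. h x y)" by simp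
  define W where "W = PiE {..<n} (\<lambda>_. UNIV :: 3 set)"
  define J where "J = Sigma Q (\<lambda>q. PiE {..<n} (\<lambda>i. Bs (fst q i) (snd q i)))"
  define e where "e j w = (\<Prod>i<n. snd j i $ w i)" for j :: "((nat \<Rightarrow> real^3) \<times> (nat \<Rightarrow> real^3)) \<times> (nat \<Rightarrow> real^3)" and w :: "nat \<Rightarrow> 3"
  have QC: "x \<in> C" "y \<in> C" "x \<noteq> y" if "(x, y) \<in> Q" for x y using that unfolding Q_def by auto
  have fB: "finite (Bs (x i) (y i))" if "(x, y) \<in> Q" "i < n" for x y i
    using Bs_props(1) nrm QC that by metis
  have fJ: "finite J" unfolding J_def using fQ fB by (auto intro!: finite_PiE)
  have fW: "finite W" unfolding W_def by (auto intro!: finite_PiE)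
  have cW: "card W = 3 ^ n" unfolding W_def by (simp add: card_PiE)
  have orth: "(\<Sum>w\<in>W. e j w * e k w) = (if j = k then 1 else 0)" if j: "j \<in> J" and k: "k \<in> J" for j k
  proof -
    obtain x y s where jj: "j = ((x, y), s)" "(x, y) \<in> Q" "s \<in> PiE {..<n} (\<lambda>i. Bs (x i) (y i))"
      using j unfolding J_def by auto
    obtain x' y' t where kk: "k = ((x', y'), t)" "(x', y') \<in> Q" "t \<in> PiE {..<n} (\<lambda>i. Bs (x' i) (y' i))"
      using k unfolding J_def by auto
    have sB: "s i \<in> Bs (x i) (y i)" if "i < n" for i using jj that by auto
    have tB: "t i \<in> Bs (x' i) (y' i)" if "i < n" for i using kk that by auto
    have C1: "x \<in> C" "y \<in> C" "x \<noteq> y" "x' \<in> C" "y' \<in> C" "x' \<noteq> y'" using QC jj kk by auto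
    have sn: "norm (s i) = 1" "s i \<bullet> x i = 0" "x i \<bullet> y i = 0 \<Longrightarrow> s i \<bullet> y i = 0" if "i < n" for i
      using Bs_props(3,5,6)[OF nrm[OF C1(1) that] nrm[OF C1(2) that]] sB[OF that] by auto
    have tn: "norm (t i) = 1" "t i \<bullet> x' i = 0" "x' i \<bullet> y' i = 0 \<Longrightarrow> t i \<bullet> y' i = 0" if "i < n" for i
      using Bs_props(3,5,6)[OF nrm[OF C1(4) that] nrm[OF C1(5) that]] tB[OF that] by auto
    have ip: "(\<Sum>w\<in>W. e j w * e k w) = (\<Prod>i<n. s i \<bullet> t i)"
      unfolding W_def e_def jj kk using inner_prod_sum by simp
    show ?thesis
    proof (cases "j = k")
      case True
      hence "t = s" using jj kk by simp
      hence "(\<Prod>i<n. s i \<bullet> t i) = 1"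
        using sn by (auto intro!: prod.neutral simp: dot_square_norm)
      thus ?thesis using ip True by simp
    next
      case False
      have "\<exists>i<n. s i \<bullet> t i = 0"
      proof (cases "(x, y) = (x', y')")
        case True
        hence "s \<noteq> t" using False jj kk by auto
        then obtain i where "s i \<noteq> t i" by auto
        moreover have "i < n" using \<open>s i \<noteq> t i\<close> jj kk by (metis PiE_arb lessThan_iff)
        ultimately show ?thesis using Bs_props(4)[OF nrm[OF C1(1)] nrm[OF C1(2)], of i] sB tB True by auto
      next
        case False
        show ?thesis
        proof (cases "x' \<notin> {x, y}")
          case True
          then obtain i where i: "i < n" "x i \<bullet> y i = 0" "y i \<bullet> x' i = 0" "x i \<bullet> x' i = 0"
            using tri[of x y x'] C1 by auto
          have "s i \<bullet> t i = 0"
            by (rule key3[of "x i" "y i" "x' i"]) (use i nrm C1 sn tn in auto)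
          thus ?thesis using i by auto
        next
          case xin: False
          show ?thesis
          proof (cases "x \<notin> {x', y'}")
            case True
            then obtain i where i: "i < n" "x' i \<bullet> y' i = 0" "y' i \<bullet> x i = 0" "x' i \<bullet> x i = 0"
              using tri[of x' y' x] C1 by auto
            have "t i \<bullet> s i = 0"
              by (rule key3[of "x' i" "y' i" "x i"]) (use i nrm C1 sn tn in auto)
            thus ?thesis using i by (auto simp: inner_commute)
          next
            case x'in: False
            show ?thesis
            proof (cases "x' = x")
              case True
              hence yy: "y \<noteq> y'" using False by auto
              then obtain i where i: "i < n" "x i \<bullet> y i = 0" "y i \<bullet> y' i = 0" "x i \<bullet> y' i = 0"
                using tri[of x y y'] C1 True by auto
              have "s i \<bullet> t i = 0"
                by (rule key3[of "x i" "y i" "y' i"])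
                  (use i nrm C1 True sn tn in auto)
              thus ?thesis using i by auto
            next
              case nx: False
              hence "x' = y" "x = y'" using xin x'in by auto
              thus ?thesis using jj(2) kk(2) unfolding Q_def by auto
            qed
          qed
        qed
      qed
      hence "(\<Prod>i<n. s i \<bullet> t i) = 0" by (auto intro: prod_zero)
      thus ?thesis using ip False by simp
    qed
  qed
  have cJ: "card J \<le> card W" by (rule bessel_card[OF fJ fW orth])
  have cardJ: "real (card J) = (\<Sum>(x, y)\<in>Q. h x y)"
  proof -
    have "card J = (\<Sum>q\<in>Q. card (PiE {..<n} (\<lambda>i. Bs (fst q i) (snd q i))))"
      unfolding J_def using fQ fB by (subst card_SigmaI) (auto intro!: finite_PiE)
    also have "\<dots> = (\<Sum>q\<in>Q. \<Prod>i<n. card (Bs (fst q i) (snd q i)))" by (simp add: card_PiE)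
    finally have "real (card J) = (\<Sum>q\<in>Q. \<Prod>i<n. real (card (Bs (fst q i) (snd q i))))" by simp
    also have "\<dots> = (\<Sum>(x, y)\<in>Q. h x y)"
    proof (rule sum.cong[OF refl], clarify)
      fix x y assume xy: "(x, y) \<in> Q"
      have "(\<Prod>i<n. real (card (Bs (x i) (y i)))) = (\<Prod>i<n. if x i \<bullet> y i \<noteq> 0 then 2 else 1)"
        using Bs_props(2) nrm QC[OF xy] by (intro prod.cong) auto
      also have "\<dots> = (\<Prod>i\<in>{i \<in> {..<n}. x i \<bullet> y i \<noteq> 0}. 2)"
        by (subst prod.inter_filter) auto
      also have "\<dots> = h x y" unfolding h_def agree_count_def by simp
      finally show "(\<Prod>i<n. real (card (Bs (fst (x, y) i) (snd (x, y) i)))) = h x y" by simp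
    qed
    finally show ?thesis .
  qed
  have "(\<Sum>(x, y)\<in>P. h x y) / 2 = real (card J)" using PQsum cardJ by simp
  also have "\<dots> \<le> 3 ^ n" using cJ cW by (metis of_nat_le_iff of_nat_numeral of_nat_power)
  finally show ?thesis unfolding P_def h_def .
qed

end
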